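(* Let $0<R_1<R_2\le\infty$, $A=\{x\in\mathbb{R}^2: R_1<\|x\|<R_2\}$, $B=\{y\in\mathbb{R}^2:\|y\|<R_1\}$. For $2\le\nu<\infty$ let $A_\nu=\{u\in\mathbb{R}^2: R_1^{1/\nu}<\|u\|<R_2^{1/\nu}\}$ and $p_\nu:A_\nu\to A$, $p_\nu(u)=u^\nu$ (where $u=(u_1,u_2)$ is identified with $u_1+iu_2\in\mathbb{C}$ and $x=(x_1,x_2)$ with $x_1+ix_2$); for $\nu=\infty$ let $A_\infty=\{(u_1,u_2)\in\mathbb{R}^2:\log R_1<u_1<\log R_2\}$ and $p_\infty(u_1,u_2)=(e^{u_1}\cos u_2,e^{u_1}\sin u_2)$. Let $\Omega_\nu=A_\nu\times B$ with projection $\pi_\nu(u,y)=p_\nu(u)+iy\in\mathbb{C}^2$. Then for every $2\le\nu\le\infty$, $\pi_\nu:\Omega_\nu\to\mathbb{C}^2$ is a $\nu$-sheeted (infinitely sheeted for $\nu=\infty$) holomorphically separable unramified domain over $\mathbb{C}^2$, and its envelope of holomorphy $\hat\pi_\nu:\hat\Omega_\nu\to\mathbb{C}^2$ is not univalent and satisfies $0\notin\hat\pi_\nu(\hat\Omega_\nu)$.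
   Context: An unramified domain over $\mathbb{C}^n$ is a connected Hausdorff space $\mathfrak D$ with a local homeomorphism $\pi:\mathfrak D\to\mathbb{C}^n$, carrying the complex structure making $\pi$ locally biholomorphic; it is univalent if $\pi$ is injective. It is holomorphically separable if for any two distinct points $p\ne q$ with $\pi(p)=\pi(q)$ there is $f\in\mathcal O(\mathfrak D)$ whose germs at $p$ and $q$ (as power series in the coordinates $\pi$) differ. The envelope of holomorphy $\hat\pi:\hat{\mathfrak D}\to\mathbb{C}^n$ is the maximal domain over $\mathbb{C}^n$, containing $\mathfrak D$ when $\mathfrak D$ is holomorphically separable, to which all $f\in\mathcal O(\mathfrak D)$ simultaneously extend analytically. *)

theory Defs
  imports "HOL-Analysis.Analysis" "HOL-Library.Extended_Nat"
begin

definition holo2 :: "(complex \<times> complex \<Rightarrow> complex) \<Rightarrow> (complex \<times> complex) set \<Rightarrow> bool" where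
  "holo2 f U \<longleftrightarrow> open U \<and>
     (\<forall>z\<in>U. \<exists>a b. (f has_derivative (\<lambda>h. a * fst h + b * snd h)) (at z))"

definition riemann_domain :: "'a topology \<Rightarrow> ('a \<Rightarrow> complex \<times> complex) \<Rightarrow> bool" where
  "riemann_domain X p \<longleftrightarrow>
     topspace X \<noteq> {} \<and> Hausdorff_space X \<and> connected_space X \<and>
     (\<forall>x\<in>topspace X. \<exists>U. openin X U \<and> x \<in> U \<and> open (p ` U) \<and>
        homeomorphic_map (subtopology X U) (subtopology euclidean (p ` U)) p)"

definition hol_fun :: "'a topology \<Rightarrow> ('a \<Rightarrow> complex \<times> complex) \<Rightarrow> ('a \<Rightarrow> complex) \<Rightarrow> bool" where
  "hol_fun X p f \<longleftrightarrow>
     (\<forall>x\<in>topspace X. \<exists>U. openin X U \<and> x \<in> U \<and> inj_on p U \<and>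
        holo2 (f \<circ> inv_into U p) (p ` U))"

definition same_germ :: "'a topology \<Rightarrow> ('a \<Rightarrow> complex \<times> complex) \<Rightarrow> ('a \<Rightarrow> complex) \<Rightarrow> 'a \<Rightarrow> 'a \<Rightarrow> bool" where
  "same_germ X p f x y \<longleftrightarrow>
     (\<exists>U V. openin X U \<and> x \<in> U \<and> openin X V \<and> y \<in> V \<and> inj_on p U \<and> inj_on p V \<and>
        p ` U = p ` V \<and> (\<forall>u\<in>U. \<forall>v\<in>V. p u = p v \<longrightarrow> f u = f v))"

definition hol_separable :: "'a topology \<Rightarrow> ('a \<Rightarrow> complex \<times> complex) \<Rightarrow> bool" where
  "hol_separable X p \<longleftrightarrow>
     (\<forall>x\<in>topspace X. \<forall>y\<in>topspace X. x \<noteq> y \<and> p x = p y \<longrightarrow>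
        (\<exists>f. hol_fun X p f \<and> \<not> same_germ X p f x y))"

definition univalent :: "'a topology \<Rightarrow> ('a \<Rightarrow> complex \<times> complex) \<Rightarrow> bool" where
  "univalent X p \<longleftrightarrow> inj_on p (topspace X)"

definition sheeted :: "'a topology \<Rightarrow> ('a \<Rightarrow> complex \<times> complex) \<Rightarrow> enat \<Rightarrow> bool" where
  "sheeted X p \<nu> \<longleftrightarrow>
     (\<forall>z\<in>p ` topspace X.
        (if \<nu> = \<infinity> then infinite {x\<in>topspace X. p x = z}
         else finite {x\<in>topspace X. p x = z} \<and> card {x\<in>topspace X. p x = z} = the_enat \<nu>))"

definition domain_map :: "'a topology \<Rightarrow> ('a \<Rightarrow> complex \<times> complex) \<Rightarrow>
    'b topology \<Rightarrow> ('b \<Rightarrow> complex \<times> complex) \<Rightarrow> ('a \<Rightarrow> 'b) \<Rightarrow> bool" where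
  "domain_map X p Y q \<phi> \<longleftrightarrow> continuous_map X Y \<phi> \<and> (\<forall>x\<in>topspace X. q (\<phi> x) = p x)"

definition extends_all :: "'a topology \<Rightarrow> ('a \<Rightarrow> complex \<times> complex) \<Rightarrow>
    'b topology \<Rightarrow> ('b \<Rightarrow> complex \<times> complex) \<Rightarrow> ('a \<Rightarrow> 'b) \<Rightarrow> bool" where
  "extends_all X p Y q \<phi> \<longleftrightarrow>
     (\<forall>f. hol_fun X p f \<longrightarrow> (\<exists>F. hol_fun Y q F \<and> (\<forall>x\<in>topspace X. F (\<phi> x) = f x)))"

text \<open>Competing
  extensions are taken with points in complex \<times> complex: every domain over C^2 is
  second countable, hence of cardinality at most the continuum, so this loses nothing.\<close>
definition is_envelope :: "'a topology \<Rightarrow> ('a \<Rightarrow> complex \<times> complex) \<Rightarrow>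
    'b topology \<Rightarrow> ('b \<Rightarrow> complex \<times> complex) \<Rightarrow> ('a \<Rightarrow> 'b) \<Rightarrow> bool" where
  "is_envelope X p Y q \<phi> \<longleftrightarrow>
     riemann_domain Y q \<and> domain_map X p Y q \<phi> \<and> extends_all X p Y q \<phi> \<and>
     (\<forall>(Z :: (complex \<times> complex) topology) r \<psi>.
        riemann_domain Z r \<and> domain_map X p Z r \<psi> \<and> extends_all X p Z r \<psi> \<longrightarrow>
        (\<exists>g. domain_map Z r Y q g \<and> (\<forall>x\<in>topspace X. g (\<psi> x) = \<phi> x)))"

definition Anu :: "real \<Rightarrow> ereal \<Rightarrow> enat \<Rightarrow> complex set" where
  "Anu R1 R2 \<nu> =
     (if \<nu> = \<infinity> then {u. ln R1 < Re u \<and> (R2 = \<infinity> \<or> Re u < ln (real_of_ereal R2))}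
      else {u. R1 powr (1 / real (the_enat \<nu>)) < norm u \<and>
               (R2 = \<infinity> \<or> norm u < real_of_ereal R2 powr (1 / real (the_enat \<nu>)))})"

definition pnu :: "enat \<Rightarrow> complex \<Rightarrow> complex" where
  "pnu \<nu> u = (if \<nu> = \<infinity> then exp u else u ^ the_enat \<nu>)"

definition Omega :: "real \<Rightarrow> ereal \<Rightarrow> enat \<Rightarrow> (complex \<times> complex) set" where
  "Omega R1 R2 \<nu> = Anu R1 R2 \<nu> \<times> {y. norm y < R1}"

text \<open>pi(u,y) = p(u) + i y, with p(u), y in R^2.\<close>
definition pinu :: "enat \<Rightarrow> complex \<times> complex \<Rightarrow> complex \<times> complex" where
  "pinu \<nu> uy = (Complex (Re (pnu \<nu> (fst uy))) (Re (snd uy)),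
                Complex (Im (pnu \<nu> (fst uy))) (Im (snd uy)))"

end

theory Submission
  imports Defs "HOL-Complex_Analysis.Complex_Analysis"
begin



definition WW :: "complex \<times> complex \<Rightarrow> complex" where
  "WW z = fst z + \<i> * snd z"

lemma pinu_eq: "pinu \<nu> a = pinu \<nu> b \<longleftrightarrow> pnu \<nu> (fst a) = pnu \<nu> (fst b) \<and> snd a = snd b"
  by (auto simp: pinu_def complex_eq_iff)

lemma WW_pinu: "WW (pinu \<nu> x) = pnu \<nu> (fst x) + \<i> * snd x"
  by (simp add: WW_def pinu_def complex_eq_iff)

lemma WW_zero: "WW (0,0) = 0" by (simp add: WW_def)

lemma continuous_pnu: "continuous_on S (pnu \<nu>)"
  by (cases "\<nu> = \<infinity>") (auto simp: pnu_def [abs_def] intro!: continuous_intros)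

lemma continuous_pinu: "continuous_on S (pinu \<nu>)"
proof -
  have "pinu \<nu> = (\<lambda>uy. (complex_of_real (Re (pnu \<nu> (fst uy))) + \<i> * complex_of_real (Re (snd uy)),
                complex_of_real (Im (pnu \<nu> (fst uy))) + \<i> * complex_of_real (Im (snd uy))))"
    by (auto simp: pinu_def fun_eq_iff Complex_eq)
  moreover have "continuous_on S (\<lambda>uy. pnu \<nu> (fst uy))"
    using continuous_pnu continuous_on_compose2 continuous_on_fst continuous_on_id by blast
  ultimately show ?thesis
    by (simp, intro continuous_intros) 
qed



lemma root_pow: "0 < (R::real) \<Longrightarrow> n > 0 \<Longrightarrow> (R powr (1 / real n)) ^ n = R"
  by (simp add: powr_inverse_root)

lemma norm_pnu_gt:
  assumes "0 < R1" "2 \<le> \<nu>" "u \<in> Anu R1 R2 \<nu>"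
  shows "R1 < norm (pnu \<nu> u)"
proof (cases "\<nu> = \<infinity>")
  case True
  then have "ln R1 < Re u" using assms by (simp add: Anu_def)
  then have "exp (ln R1) < exp (Re u)" by simp
  then show ?thesis using True assms by (simp add: pnu_def)
next
  case False
  then obtain n where n: "\<nu> = enat n" by auto
  with assms have "n \<ge> 2" by (simp add: numeral_eq_enat)
  have "R1 powr (1 / real n) < norm u" using assms n by (simp add: Anu_def)
  then have "(R1 powr (1 / real n)) ^ n < norm u ^ n"
    using \<open>n \<ge> 2\<close> by (intro power_strict_mono) auto
  then show ?thesis using n root_pow[OF assms(1), of n] \<open>n \<ge> 2\<close>
    by (simp add: pnu_def norm_power)
qed

lemma enat_cases2:
  assumes "2 \<le> \<nu>"
  obtains "\<nu> = \<infinity>" | n where "\<nu> = enat n" "n \<ge> 2" "\<nu> \<noteq> \<infinity>"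
  using assms by (cases \<nu>) (auto simp: numeral_eq_enat)

lemma Anu_fibre:
  assumes "0 < R1" "2 \<le> \<nu>" "u \<in> Anu R1 R2 \<nu>" "pnu \<nu> v = pnu \<nu> u"
  shows "v \<in> Anu R1 R2 \<nu>"
  using assms(2)
proof (cases rule: enat_cases2)
  case 1
  have "exp v = exp u" using assms(4) 1 unfolding pnu_def by simp
  then have "norm (exp v) = norm (exp u)" by (rule arg_cong)
  then have "Re v = Re u" by simp
  then show ?thesis using assms(3) 1 unfolding Anu_def by simp
next
  case (2 n)
  then have "v ^ n = u ^ n" using assms(4) unfolding pnu_def by simp
  then have "norm v ^ n = norm u ^ n" by (metis norm_power)
  then have "norm v = norm u" using power_eq_imp_eq_base[of "norm v" n "norm u"] 2 by simp
  then show ?thesis using assms(3) 2 unfolding Anu_def by simp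
qed

lemma open_Anu: "open (Anu R1 R2 \<nu>)"
proof -
  have o1: "open {u::complex. a < Re u}" "open {u::complex. Re u < a}"
       "open {u::complex. a < norm u}" "open {u::complex. norm u < a}" for a
    by (auto intro!: open_Collect_less continuous_intros)
  show ?thesis
    unfolding Anu_def
    by (cases "R2 = \<infinity>"; cases "\<nu> = \<infinity>")
       (simp_all add: Collect_conj_eq o1 open_Int)
qed

lemma open_Omega: "open (Omega R1 R2 \<nu>)"
proof -
  have "{y::complex. norm y < R1} = ball 0 R1" by auto
  then show ?thesis by (simp add: Omega_def open_Times open_Anu)
qed

lemma Anu_nonempty:
  assumes "0 < R1" "ereal R1 < R2" "2 \<le> \<nu>"
  shows "Anu R1 R2 \<nu> \<noteq> {}"
proof -
  consider (inf) "R2 = \<infinity>" | (fin) r2 where "R2 = ereal r2" "R1 < r2"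
    using assms by (cases R2) auto
  then show ?thesis
  proof cases
    case inf
    show ?thesis using assms(3)
    proof (cases rule: enat_cases2)
      case 1
      then have "complex_of_real (ln R1 + 1) \<in> Anu R1 R2 \<nu>" using inf by (simp add: Anu_def)
      then show ?thesis by blast
    next
      case (2 n)
      have "R1 powr (1 / real n) \<ge> 0" by simp
      then have "complex_of_real (R1 powr (1 / real n) + 1) \<in> Anu R1 R2 \<nu>"
        using 2 \<open>R2 = \<infinity>\<close> by (simp add: Anu_def)
      then show ?thesis by blast
    qed
  next
    case fin
    show ?thesis using assms(3)
    proof (cases rule: enat_cases2)
      case 1
      have "ln R1 < ln r2" using fin assms by simp
      then have "complex_of_real ((ln R1 + ln r2)/2) \<in> Anu R1 R2 \<nu>" using 1 fin by (simp add: Anu_def)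
      then show ?thesis by blast
    next
      case (2 n)
      define a where "a = R1 powr (1 / real n)"
      define b where "b = r2 powr (1 / real n)"
      have "a < b"
        using fin assms 2 unfolding a_def b_def by (intro powr_less_mono2) auto
      moreover have "a \<ge> 0" unfolding a_def by simp
      ultimately obtain m where m: "a < m" "m < b" "norm (complex_of_real m) = m"
        by (metis dense norm_of_real abs_of_nonneg order.strict_implies_order order.trans)
      then have "complex_of_real m \<in> Anu R1 R2 \<nu>"
        using 2 fin by (simp add: Anu_def a_def[symmetric] b_def[symmetric])
      then show ?thesis by blast
    qed
  qed
qed

lemma connected_Anu:
  assumes "2 \<le> \<nu>"
  shows "connected (Anu R1 R2 \<nu>)"
  using assms
proof (cases rule: enat_cases2)
  case 1
  have "convex {u::complex. a < Re u}" "convex {u::complex. Re u < a}" for a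
    by (simp_all add: convex_halfspace_Re_gt convex_halfspace_Re_lt)
  then have "convex (Anu R1 R2 \<nu>)"
    unfolding Anu_def using 1
    by (cases "R2 = \<infinity>") (simp_all add: Collect_conj_eq convex_Int)
  then show ?thesis by (rule convex_connected)
next
  case (2 n)
  show ?thesis
  proof (cases "R2 = \<infinity>")
    case True
    have "Anu R1 R2 \<nu> = - cball 0 (R1 powr (1 / real n))"
      using 2 True by (auto simp: Anu_def)
    moreover have "connected (- cball (0::complex) (R1 powr (1 / real n)))"
      by (rule connected_complement_bounded_convex) auto
    ultimately show ?thesis by simp
  next
    case False
    have "Anu R1 R2 \<nu> = {x. R1 powr (1 / real n) < norm (x - 0) \<and> norm (x - 0) < real_of_ereal R2 powr (1 / real n)}"
      using 2 False by (auto simp: Anu_def)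
    then show ?thesis using connected_annulus(1)[where 'N=complex, of "R1 powr (1/real n)" 0 "real_of_ereal R2 powr (1/real n)"] by simp
  qed
qed

lemma connected_Omega:
  assumes "2 \<le> \<nu>"
  shows "connected (Omega R1 R2 \<nu>)"
proof -
  have "{y::complex. norm y < R1} = ball 0 R1" by auto
  then show ?thesis unfolding Omega_def
    using connected_Anu[OF assms] by (simp add: connected_Times)
qed

lemma Omega_nonempty:
  assumes "0 < R1" "ereal R1 < R2" "2 \<le> \<nu>"
  shows "Omega R1 R2 \<nu> \<noteq> {}"
proof -
  obtain u where "u \<in> Anu R1 R2 \<nu>" using Anu_nonempty[OF assms] by blast
  then have "(u, 0) \<in> Omega R1 R2 \<nu>" using assms(1) by (simp add: Omega_def)
  then show ?thesis by blast
qed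


lemma homeo_tos: "homeomorphism S T f g \<Longrightarrow> homeomorphic_map (top_of_set S) (top_of_set T) f"
  unfolding homeomorphic_map_maps homeomorphic_maps_def
  by (intro exI[of _ g]) (auto simp: homeomorphism_def continuous_map_subtopology_eu)

lemma pnu_loc_inj:
  assumes "2 \<le> \<nu>" "\<nu> = \<infinity> \<or> u \<noteq> 0"
  obtains r where "r > 0" "inj_on (pnu \<nu>) (ball u r)"
  using assms(1)
proof (cases rule: enat_cases2)
  case 1
  have "exp holomorphic_on UNIV" by (auto intro: holomorphic_intros)
  moreover have "deriv exp u \<noteq> 0"
    using DERIV_imp_deriv[OF DERIV_exp[of u]] by simp
  ultimately obtain r where "r > 0" "inj_on exp (ball u r)"
    using has_complex_derivative_locally_injective[of exp UNIV u] by auto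
  moreover have "pnu \<nu> = exp" using 1 by (simp add: pnu_def fun_eq_iff)
  ultimately show ?thesis using that by auto
next
  case (2 n)
  have "(\<lambda>u. u ^ n) holomorphic_on UNIV" by (auto intro: holomorphic_intros)
  moreover have "deriv (\<lambda>u. u ^ n) u = of_nat n * u ^ (n - 1)"
    by (rule DERIV_imp_deriv) (auto intro!: derivative_eq_intros)
  moreover have "u \<noteq> 0" using assms 2 by auto
  ultimately obtain r where "r > 0" "inj_on (\<lambda>u. u ^ n) (ball u r)"
    using has_complex_derivative_locally_injective[of "\<lambda>u. u ^ n" UNIV u] 2 by auto
  moreover have "pnu \<nu> = (\<lambda>u. u ^ n)" using 2 by (simp add: pnu_def fun_eq_iff)
  ultimately show ?thesis using that by auto
qed

lemma Anu_nonzero: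
  assumes "0 < R1" "2 \<le> \<nu>" "u \<in> Anu R1 R2 \<nu>"
  shows "\<nu> = \<infinity> \<or> u \<noteq> 0"
  using assms(2)
proof (cases rule: enat_cases2)
  case (2 n)
  show ?thesis
  proof (rule ccontr)
    assume "\<not> ?thesis"
    then have "pnu \<nu> u = 0" using 2 by (simp add: pnu_def power_0_left)
    then show False using norm_pnu_gt[OF assms] assms(1) by simp
  qed
qed simp

lemma chart_Omega:
  assumes "0 < R1" "2 \<le> \<nu>" "x \<in> Omega R1 R2 \<nu>"
  obtains U where "open U" "U \<subseteq> Omega R1 R2 \<nu>" "x \<in> U" "inj_on (pinu \<nu>) U"
proof -
  have "fst x \<in> Anu R1 R2 \<nu>" using assms by (auto simp: Omega_def)
  then obtain r where r: "r > 0" "inj_on (pnu \<nu>) (ball (fst x) r)"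
    using pnu_loc_inj Anu_nonzero assms by metis
  define U where "U = (ball (fst x) r \<times> UNIV) \<inter> Omega R1 R2 \<nu>"
  have "open U" unfolding U_def by (intro open_Int open_Times open_Omega) auto
  moreover have "x \<in> U" using r assms by (cases x) (auto simp: U_def)
  moreover have "inj_on (pinu \<nu>) U"
  proof (rule inj_onI)
    fix a b assume "a \<in> U" "b \<in> U" "pinu \<nu> a = pinu \<nu> b"
    then have "pnu \<nu> (fst a) = pnu \<nu> (fst b)" "snd a = snd b" by (auto simp: pinu_eq)
    moreover have "fst a \<in> ball (fst x) r" "fst b \<in> ball (fst x) r"
      using \<open>a \<in> U\<close> \<open>b \<in> U\<close> by (auto simp: U_def mem_Times_iff)
    ultimately have "fst a = fst b" using r(2) by (auto dest: inj_onD)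
    then show "a = b" using \<open>snd a = snd b\<close> by (simp add: prod_eq_iff)
  qed
  ultimately show ?thesis using that U_def by auto
qed

lemma chart_Omega_homeo:
  assumes "open U" "inj_on (pinu \<nu>) U"
  shows "open (pinu \<nu> ` U)" "homeomorphism U (pinu \<nu> ` U) (pinu \<nu>) (inv_into U (pinu \<nu>))"
proof -
  show "open (pinu \<nu> ` U)"
    using assms by (intro invariance_of_domain_gen continuous_pinu) auto
  show "homeomorphism U (pinu \<nu> ` U) (pinu \<nu>) (inv_into U (pinu \<nu>))"
    using assms continuous_pinu
    by (simp add: continuous_on_inverse_open homeomorphism_def)
qed

lemma riemann_Omega:
  assumes "0 < R1" "ereal R1 < R2" "2 \<le> \<nu>"
  shows "riemann_domain (top_of_set (Omega R1 R2 \<nu>)) (pinu \<nu>)"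
  unfolding riemann_domain_def
proof (intro conjI ballI)
  show "topspace (top_of_set (Omega R1 R2 \<nu>)) \<noteq> {}"
    using Omega_nonempty[OF assms] by simp
  show "Hausdorff_space (top_of_set (Omega R1 R2 \<nu>))"
    by (simp add: Hausdorff_space_subtopology)
  show "connected_space (top_of_set (Omega R1 R2 \<nu>))"
    using connected_Omega[OF assms(3)] connected_space_subtopology connectedin_iff_connected by blast
  fix x assume "x \<in> topspace (top_of_set (Omega R1 R2 \<nu>))"
  then have x: "x \<in> Omega R1 R2 \<nu>" by simp
  obtain U where U: "open U" "U \<subseteq> Omega R1 R2 \<nu>" "x \<in> U" "inj_on (pinu \<nu>) U"
    using chart_Omega[OF assms(1,3) x] by blast
  show "\<exists>U. openin (top_of_set (Omega R1 R2 \<nu>)) U \<and> x \<in> U \<and> open (pinu \<nu> ` U) \<and>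
          homeomorphic_map (subtopology (top_of_set (Omega R1 R2 \<nu>)) U) (top_of_set (pinu \<nu> ` U)) (pinu \<nu>)"
  proof (intro exI conjI)
    show "openin (top_of_set (Omega R1 R2 \<nu>)) U" using U by (simp add: open_subset)
    show "open (pinu \<nu> ` U)" using chart_Omega_homeo U by blast
    have "subtopology (top_of_set (Omega R1 R2 \<nu>)) U = top_of_set U"
      using U by (simp add: subtopology_subtopology Int_absorb1)
    then show "homeomorphic_map (subtopology (top_of_set (Omega R1 R2 \<nu>)) U) (top_of_set (pinu \<nu> ` U)) (pinu \<nu>)"
      using homeo_tos chart_Omega_homeo(2)[OF U(1,4)] by metis
  qed (use U in auto)
qed


lemma fibre_eq:
  assumes "0 < R1" "2 \<le> \<nu>" "x0 \<in> Omega R1 R2 \<nu>"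
  shows "{x \<in> Omega R1 R2 \<nu>. pinu \<nu> x = pinu \<nu> x0} = (\<lambda>u. (u, snd x0)) ` {u. pnu \<nu> u = pnu \<nu> (fst x0)}"
proof -
  have u0: "fst x0 \<in> Anu R1 R2 \<nu>" "norm (snd x0) < R1" using assms(3) by (auto simp: Omega_def)
  show ?thesis
  proof (intro equalityI subsetI)
    fix x assume "x \<in> {x \<in> Omega R1 R2 \<nu>. pinu \<nu> x = pinu \<nu> x0}"
    then have "pnu \<nu> (fst x) = pnu \<nu> (fst x0)" "snd x = snd x0" by (auto simp: pinu_eq)
    then show "x \<in> (\<lambda>u. (u, snd x0)) ` {u. pnu \<nu> u = pnu \<nu> (fst x0)}"
      by (intro image_eqI[of _ _ "fst x"]) (auto simp: prod_eq_iff)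
  next
    fix x assume "x \<in> (\<lambda>u. (u, snd x0)) ` {u. pnu \<nu> u = pnu \<nu> (fst x0)}"
    then obtain u where u: "x = (u, snd x0)" "pnu \<nu> u = pnu \<nu> (fst x0)" by auto
    then have "u \<in> Anu R1 R2 \<nu>" using Anu_fibre[OF assms(1,2) u0(1)] by blast
    then show "x \<in> {x \<in> Omega R1 R2 \<nu>. pinu \<nu> x = pinu \<nu> x0}"
      using u u0 by (auto simp: Omega_def pinu_eq)
  qed
qed

lemma fibre_size:
  assumes "0 < R1" "2 \<le> \<nu>" "x0 \<in> Omega R1 R2 \<nu>"
  shows "if \<nu> = \<infinity> then infinite {x \<in> Omega R1 R2 \<nu>. pinu \<nu> x = pinu \<nu> x0}
         else finite {x \<in> Omega R1 R2 \<nu>. pinu \<nu> x = pinu \<nu> x0} \<and>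
              card {x \<in> Omega R1 R2 \<nu>. pinu \<nu> x = pinu \<nu> x0} = the_enat \<nu>"
proof -
  have inj: "inj (\<lambda>u. (u, snd x0))" by (auto intro: injI)
  have u0: "fst x0 \<in> Anu R1 R2 \<nu>" using assms(3) by (auto simp: Omega_def)
  note eq = fibre_eq[OF assms]
  show ?thesis
    using assms(2)
  proof (cases rule: enat_cases2)
    case 1
    define f where "f = (\<lambda>k::int. fst x0 + (of_int (2 * k) * pi) * \<i>)"
    have "f k \<in> {u. pnu \<nu> u = pnu \<nu> (fst x0)}" for k
    proof -
      have "exp (f k) = exp (fst x0)" unfolding exp_eq f_def by blast
      then show ?thesis using 1 by (simp add: pnu_def)
    qed
    then have sub: "range f \<subseteq> {u. pnu \<nu> u = pnu \<nu> (fst x0)}" by blast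
    have "inj f"
    proof (rule injI)
      fix a b assume "f a = f b"
      then have "Im (f a) = Im (f b)" by simp
      then have "real_of_int (2 * a) * pi = real_of_int (2 * b) * pi" by (simp add: f_def)
      then show "a = b" by simp
    qed
    have "infinite (range f)"
    proof
      assume "finite (range f)"
      then have "finite (UNIV :: int set)" using finite_imageD[OF _ \<open>inj f\<close>] by blast
      then show False using infinite_UNIV_int by blast
    qed
    then have inf: "infinite {u. pnu \<nu> u = pnu \<nu> (fst x0)}" using finite_subset[OF sub] by blast
    have "infinite ((\<lambda>u. (u, snd x0)) ` {u. pnu \<nu> u = pnu \<nu> (fst x0)})"
    proof
      assume "finite ((\<lambda>u. (u, snd x0)) ` {u. pnu \<nu> u = pnu \<nu> (fst x0)})"
      then have "finite {u. pnu \<nu> u = pnu \<nu> (fst x0)}"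
        using finite_imageD inj_on_subset[OF inj subset_UNIV] by blast
      then show False using inf by blast
    qed
    then show ?thesis using 1 eq by simp
  next
    case (2 n)
    have "fst x0 \<noteq> 0" using Anu_nonzero[OF assms(1,2) u0] 2 by simp
    then have "fst x0 ^ n \<noteq> 0" by simp
    then have c: "card {u. u ^ n = fst x0 ^ n} = n" using 2 by (intro card_nth_roots) auto
    have "{u. pnu \<nu> u = pnu \<nu> (fst x0)} = {u. u ^ n = fst x0 ^ n}" using 2 by (simp add: pnu_def)
    moreover have "card ((\<lambda>u. (u, snd x0)) ` {u. pnu \<nu> u = pnu \<nu> (fst x0)}) = card {u. pnu \<nu> u = pnu \<nu> (fst x0)}"
      by (rule card_image[OF inj_on_subset[OF inj subset_UNIV]])
    ultimately have c2: "card ((\<lambda>u. (u, snd x0)) ` {u. pnu \<nu> u = pnu \<nu> (fst x0)}) = n"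
      using c by simp
    then have "finite ((\<lambda>u. (u, snd x0)) ` {u. pnu \<nu> u = pnu \<nu> (fst x0)})"
      using 2 card_ge_0_finite[of "(\<lambda>u. (u, snd x0)) ` {u. pnu \<nu> u = pnu \<nu> (fst x0)}"] by simp
    then show ?thesis using c2 eq 2 by simp
  qed
qed

lemma sheeted_Omega:
  assumes "0 < R1" "2 \<le> \<nu>"
  shows "sheeted (top_of_set (Omega R1 R2 \<nu>)) (pinu \<nu>) \<nu>"
  unfolding sheeted_def
proof
  fix z assume "z \<in> pinu \<nu> ` topspace (top_of_set (Omega R1 R2 \<nu>))"
  then obtain x0 where x0: "x0 \<in> Omega R1 R2 \<nu>" "z = pinu \<nu> x0" by auto
  have eqF: "{x \<in> topspace (top_of_set (Omega R1 R2 \<nu>)). pinu \<nu> x = z} = {x \<in> Omega R1 R2 \<nu>. pinu \<nu> x = pinu \<nu> x0}"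
    using x0 by simp
  show "if \<nu> = \<infinity> then infinite {x \<in> topspace (top_of_set (Omega R1 R2 \<nu>)). pinu \<nu> x = z}
         else finite {x \<in> topspace (top_of_set (Omega R1 R2 \<nu>)). pinu \<nu> x = z} \<and>
              card {x \<in> topspace (top_of_set (Omega R1 R2 \<nu>)). pinu \<nu> x = z} = the_enat \<nu>"
    unfolding eqF by (rule fibre_size[OF assms x0(1)])
qed

lemma fibre_other:
  assumes "0 < R1" "2 \<le> \<nu>" "x0 \<in> Omega R1 R2 \<nu>"
  obtains x1 where "x1 \<in> Omega R1 R2 \<nu>" "x1 \<noteq> x0" "pinu \<nu> x1 = pinu \<nu> x0"
proof -
  let ?F = "{x \<in> Omega R1 R2 \<nu>. pinu \<nu> x = pinu \<nu> x0}"
  have "\<not> ?F \<subseteq> {x0}"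
  proof
    assume sub: "?F \<subseteq> {x0}"
    then have "finite ?F" using finite_subset by blast
    have "card ?F \<le> 1" using sub card_mono[of "{x0}" ?F] by simp
    note fs = fibre_size[OF assms]
    show False using assms(2)
    proof (cases rule: enat_cases2)
      case 1
      then show ?thesis using fs \<open>finite ?F\<close> by simp
    next
      case (2 n)
      then show ?thesis using fs \<open>card ?F \<le> 1\<close> by simp
    qed
  qed
  then show ?thesis using that by blast
qed


lemma norm_WW_le: "norm (WW h) \<le> 2 * norm h"
proof -
  have "norm (fst h) \<le> norm h" "norm (snd h) \<le> norm h"
    using norm_fst_le[of "fst h" "snd h"] norm_snd_le[of "snd h" "fst h"] by simp_all
  moreover have "norm (WW h) \<le> norm (fst h) + norm (snd h)"
    unfolding WW_def by (metis norm_triangle_ineq norm_mult norm_ii mult_1)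
  ultimately show ?thesis by simp
qed

lemma WW_diff: "WW a - WW b = WW (a - b)"
  by (simp add: WW_def algebra_simps)

lemma deriv_inv_lemma:
  fixes G :: "complex \<times> complex \<Rightarrow> complex"
  assumes cont: "continuous (at z) G"
    and E: "(E has_field_derivative e) (at (G z))" and e: "e \<noteq> 0"
    and T: "open T" "z \<in> T" and eq: "\<And>z'. z' \<in> T \<Longrightarrow> E (G z') = WW z'"
  shows "(G has_derivative (\<lambda>h. (1/e) * fst h + (\<i>/e) * snd h)) (at z)"
proof -
  obtain g where g: "\<And>t. E t - E (G z) = g t * (t - G z)" "continuous (at (G z)) g" "g (G z) = e"
    using E DERIV_caratheodory_within[of E e "G z" UNIV] by auto
  define K where "K = (\<lambda>z'. g (G z'))"
  have contK: "continuous (at z) K" unfolding K_def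
    using continuous_at_compose[OF cont, of g] g(2) by (simp add: o_def)
  have Kz: "K z = e" by (simp add: K_def g(3))
  define M where "M = (\<lambda>z'. 1 / K z')"
  have contM: "continuous (at z) M" unfolding M_def
    using contK Kz e by (intro continuous_divide continuous_const) auto
  have Mz: "M z = 1 / e" by (simp add: M_def Kz)
  have evK: "eventually (\<lambda>z'. K z' \<noteq> 0) (at z)"
  proof -
    have "(K \<longlongrightarrow> e) (at z)" using contK Kz by (simp add: continuous_at)
    then show ?thesis using e tendsto_imp_eventually_ne by blast
  qed
  have evT: "eventually (\<lambda>z'. z' \<in> T) (at z)" using T eventually_at_topological by blast
  have key: "G z' - G z = WW (z' - z) * M z'" if "z' \<in> T" "K z' \<noteq> 0" for z'
  proof -
    have "WW (z' - z) = E (G z') - E (G z)" using eq[OF that(1)] eq[OF T(2)] WW_diff by simp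
    also have "\<dots> = K z' * (G z' - G z)" using g(1) K_def by simp
    finally show ?thesis using that(2) by (simp add: M_def field_simps)
  qed
  define D where "D = (\<lambda>h::complex \<times> complex. (1/e) * fst h + (\<i>/e) * snd h)"
  have D: "D h = WW h * (1/e)" for h by (simp add: D_def WW_def add_divide_distrib)
  have "bounded_linear D" unfolding D_def by (intro bounded_linear_intros)
  moreover have "((\<lambda>h. norm (G (z + h) - G z - D h) / norm h) \<longlongrightarrow> 0) (at 0)"
  proof (rule Lim_null_comparison)
    have "eventually (\<lambda>z'. z' \<in> T \<and> K z' \<noteq> 0) (at z)" using evK evT eventually_conj by blast
    then have ev: "eventually (\<lambda>h. z + h \<in> T \<and> K (z + h) \<noteq> 0) (at 0)"
      using eventually_at_to_0[of _ z] by (simp add: add.commute)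
    show "eventually (\<lambda>h. norm (norm (G (z + h) - G z - D h) / norm h) \<le> 2 * norm (M (z + h) - M z)) (at 0)"
      using ev
    proof eventually_elim
      case (elim h)
      have "G (z + h) - G z - D h = WW h * (M (z + h) - M z)"
        using key[OF conjunct1[OF elim] conjunct2[OF elim]] by (simp add: D Mz algebra_simps)
      then have "norm (G (z + h) - G z - D h) \<le> 2 * norm h * norm (M (z + h) - M z)"
        using norm_WW_le[of h] by (simp add: norm_mult mult_right_mono)
      then show ?case
        by (cases "h = 0") (simp_all add: divide_le_eq mult.commute mult.left_commute)
    qed
    have "((\<lambda>h. M (z + h)) \<longlongrightarrow> M z) (at 0)"
      using contM LIM_offset_zero[of M "M z" z] by (simp add: continuous_at)
    then have "((\<lambda>h. M (z + h) - M z) \<longlongrightarrow> 0) (at 0)"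
      using tendsto_diff[of _ "M z" _ "\<lambda>_. M z" "M z"] by (simp add: LIM_zero)
    then show "((\<lambda>h. 2 * norm (M (z + h) - M z)) \<longlongrightarrow> 0) (at 0)"
      by (intro tendsto_mult_right_zero tendsto_norm_zero)
  qed
  ultimately show ?thesis unfolding has_derivative_at D_def by simp
qed


definition qq :: "enat \<Rightarrow> complex \<times> complex \<Rightarrow> complex" where
  "qq \<nu> x = 1 + \<i> * snd x / pnu \<nu> (fst x)"

definition rt :: "enat \<Rightarrow> complex \<times> complex \<Rightarrow> complex" where
  "rt \<nu> x = (if \<nu> = \<infinity> then fst x + Ln (qq \<nu> x)
             else fst x * exp (Ln (qq \<nu> x) / of_nat (the_enat \<nu>)))"

lemma Omega_facts:
  assumes "0 < R1" "2 \<le> \<nu>" "x \<in> Omega R1 R2 \<nu>"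
  shows "R1 < norm (pnu \<nu> (fst x))" "norm (snd x) < R1" "pnu \<nu> (fst x) \<noteq> 0"
proof -
  show a: "R1 < norm (pnu \<nu> (fst x))" using norm_pnu_gt[OF assms(1,2), of "fst x"] assms(3)
    by (auto simp: Omega_def)
  show "norm (snd x) < R1" using assms(3) by (auto simp: Omega_def)
  show "pnu \<nu> (fst x) \<noteq> 0" using a assms(1) by auto
qed

lemma qq_Re:
  assumes "0 < R1" "2 \<le> \<nu>" "x \<in> Omega R1 R2 \<nu>"
  shows "0 < Re (qq \<nu> x)"
proof -
  note f = Omega_facts[OF assms]
  have "norm (\<i> * snd x / pnu \<nu> (fst x)) = norm (snd x) / norm (pnu \<nu> (fst x))"
    by (simp add: norm_divide norm_mult)
  also have "\<dots> < 1" using f by (simp add: divide_less_eq)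
  finally have "\<bar>Re (\<i> * snd x / pnu \<nu> (fst x))\<bar> < 1"
    using abs_Re_le_cmod le_less_trans by blast
  then show ?thesis by (simp add: qq_def)
qed

lemma qq_good:
  assumes "0 < R1" "2 \<le> \<nu>" "x \<in> Omega R1 R2 \<nu>"
  shows "qq \<nu> x \<notin> \<real>\<^sub>\<le>\<^sub>0" "qq \<nu> x \<noteq> 0"
  using qq_Re[OF assms] by (auto simp: complex_nonpos_Reals_iff)

lemma WW_pinu_nonzero:
  assumes "0 < R1" "2 \<le> \<nu>" "x \<in> Omega R1 R2 \<nu>"
  shows "WW (pinu \<nu> x) \<noteq> 0"
proof -
  note f = Omega_facts[OF assms]
  have "WW (pinu \<nu> x) = pnu \<nu> (fst x) * qq \<nu> x"
    using f(3) by (simp add: WW_pinu qq_def field_simps)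
  then show ?thesis using f(3) qq_good[OF assms] by simp
qed

lemma pnu_rt:
  assumes "0 < R1" "2 \<le> \<nu>" "x \<in> Omega R1 R2 \<nu>"
  shows "pnu \<nu> (rt \<nu> x) = WW (pinu \<nu> x)"
proof -
  note f = Omega_facts[OF assms]
  have q: "exp (Ln (qq \<nu> x)) = qq \<nu> x" using qq_good[OF assms] by simp
  have W: "WW (pinu \<nu> x) = pnu \<nu> (fst x) * qq \<nu> x"
    using f(3) by (simp add: WW_pinu qq_def field_simps)
  show ?thesis using assms(2)
  proof (cases rule: enat_cases2)
    case 1
    then show ?thesis using W q by (simp add: rt_def pnu_def exp_add)
  next
    case (2 n)
    have "exp (Ln (qq \<nu> x) / of_nat n) ^ n = exp (of_nat n * (Ln (qq \<nu> x) / of_nat n))"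
      by (rule exp_of_nat_mult[symmetric])
    also have "of_nat n * (Ln (qq \<nu> x) / of_nat n) = Ln (qq \<nu> x)" using 2 by simp
    also have "exp (Ln (qq \<nu> x)) = qq \<nu> x" by (rule q)
    finally show ?thesis using 2 W by (simp add: rt_def pnu_def power_mult_distrib)
  qed
qed

lemma rt_inj_fibre:
  assumes "0 < R1" "2 \<le> \<nu>" "x \<in> Omega R1 R2 \<nu>" "x' \<in> Omega R1 R2 \<nu>"
    and "pinu \<nu> x = pinu \<nu> x'" "rt \<nu> x = rt \<nu> x'"
  shows "x = x'"
proof -
  have e: "pnu \<nu> (fst x) = pnu \<nu> (fst x')" "snd x = snd x'" using assms(5) by (auto simp: pinu_eq)
  then have qe: "qq \<nu> x = qq \<nu> x'" by (simp add: qq_def)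
  have "fst x = fst x'"
    using assms(2)
  proof (cases rule: enat_cases2)
    case 1
    then show ?thesis using assms(6) qe by (simp add: rt_def)
  next
    case (2 n)
    then show ?thesis using assms(6) qe by (simp add: rt_def)
  qed
  then show ?thesis using e(2) by (simp add: prod_eq_iff)
qed

lemma continuous_rt:
  assumes "0 < R1" "2 \<le> \<nu>"
  shows "continuous_on (Omega R1 R2 \<nu>) (rt \<nu>)"
proof -
  have cp: "continuous_on (Omega R1 R2 \<nu>) (\<lambda>x. pnu \<nu> (fst x))"
    using continuous_pnu continuous_on_compose2 continuous_on_fst continuous_on_id by blast
  have cq: "continuous_on (Omega R1 R2 \<nu>) (qq \<nu>)"
    unfolding qq_def [abs_def]
    using Omega_facts[OF assms] cp by (auto intro!: continuous_intros)
  have "continuous_on (- \<real>\<^sub>\<le>\<^sub>0) Ln" by (rule continuous_on_Ln) auto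
  moreover have "qq \<nu> ` Omega R1 R2 \<nu> \<subseteq> - \<real>\<^sub>\<le>\<^sub>0" using qq_good(1)[OF assms] by blast
  ultimately have cl: "continuous_on (Omega R1 R2 \<nu>) (\<lambda>x. Ln (qq \<nu> x))"
    using continuous_on_compose2[OF _ cq] by blast
  have cf: "continuous_on (Omega R1 R2 \<nu>) fst" by (rule continuous_on_fst[OF continuous_on_id])
  show ?thesis
    using assms(2)
  proof (cases rule: enat_cases2)
    case 1
    have "continuous_on (Omega R1 R2 \<nu>) (\<lambda>x. fst x + Ln (qq \<nu> x))" by (rule continuous_on_add[OF cf cl])
    then show ?thesis using 1 by (simp add: rt_def [abs_def])
  next
    case (2 n)
    have "continuous_on (Omega R1 R2 \<nu>) (\<lambda>x. fst x * exp (Ln (qq \<nu> x) / of_nat n))"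
      using 2 by (intro continuous_on_mult[OF cf] continuous_on_exp continuous_on_divide[OF cl]) auto
    then show ?thesis using 2 by (simp add: rt_def [abs_def])
  qed
qed

lemma rt_nonzero:
  assumes "0 < R1" "2 \<le> \<nu>" "x \<in> Omega R1 R2 \<nu>" "\<nu> \<noteq> \<infinity>"
  shows "rt \<nu> x \<noteq> 0"
proof
  assume "rt \<nu> x = 0"
  obtain n where n: "\<nu> = enat n" "n \<ge> 2" using assms(2,4) by (cases \<nu>) (auto simp: numeral_eq_enat)
  have "pnu \<nu> (rt \<nu> x) = 0" using n \<open>rt \<nu> x = 0\<close> by (simp add: pnu_def power_0_left)
  then show False using pnu_rt[OF assms(1-3)] WW_pinu_nonzero[OF assms(1-3)] by simp
qed


lemma hol_fun_OmegaI:
  assumes "0 < R1" "2 \<le> \<nu>"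
   and H: "\<And>U. open U \<Longrightarrow> U \<subseteq> Omega R1 R2 \<nu> \<Longrightarrow> inj_on (pinu \<nu>) U \<Longrightarrow>
            holo2 (f \<circ> inv_into U (pinu \<nu>)) (pinu \<nu> ` U)"
  shows "hol_fun (top_of_set (Omega R1 R2 \<nu>)) (pinu \<nu>) f"
  unfolding hol_fun_def
proof
  fix x assume "x \<in> topspace (top_of_set (Omega R1 R2 \<nu>))"
  then have x: "x \<in> Omega R1 R2 \<nu>" by simp
  obtain U where U: "open U" "U \<subseteq> Omega R1 R2 \<nu>" "x \<in> U" "inj_on (pinu \<nu>) U"
    using chart_Omega[OF assms(1,2) x] by blast
  show "\<exists>U. openin (top_of_set (Omega R1 R2 \<nu>)) U \<and> x \<in> U \<and> inj_on (pinu \<nu>) U \<and>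
            holo2 (f \<circ> inv_into U (pinu \<nu>)) (pinu \<nu> ` U)"
    using U H[OF U(1,2,4)] by (intro exI[of _ U]) (simp add: open_subset)
qed

lemma pnu_deriv_ex:
  assumes "2 \<le> \<nu>" "\<nu> = \<infinity> \<or> w \<noteq> 0"
  obtains e where "e \<noteq> 0" "(pnu \<nu> has_field_derivative e) (at w)"
  using assms(1)
proof (cases rule: enat_cases2)
  case 1
  then have "pnu \<nu> = exp" by (simp add: pnu_def fun_eq_iff)
  then show ?thesis using that[of "exp w"] DERIV_exp[of w] by simp
next
  case (2 n)
  then have "pnu \<nu> = (\<lambda>u. u ^ n)" by (simp add: pnu_def fun_eq_iff)
  moreover have "((\<lambda>u. u ^ n) has_field_derivative of_nat n * w ^ (n - 1)) (at w)"
    by (auto intro!: derivative_eq_intros)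
  moreover have "of_nat n * w ^ (n - 1) \<noteq> 0" using assms 2 by auto
  ultimately show ?thesis using that by metis
qed

lemma chart_cont:
  assumes "open U" "U \<subseteq> Omega R1 R2 \<nu>" "inj_on (pinu \<nu>) U" "continuous_on (Omega R1 R2 \<nu>) f"
    and z: "z \<in> pinu \<nu> ` U"
  shows "continuous (at z) (f \<circ> inv_into U (pinu \<nu>))"
proof -
  note h = chart_Omega_homeo[OF assms(1,3)]
  have "continuous_on (pinu \<nu> ` U) (inv_into U (pinu \<nu>))"
    and im: "inv_into U (pinu \<nu>) ` (pinu \<nu> ` U) = U"
    using h(2) by (auto simp: homeomorphism_def)
  moreover have "continuous_on U f" using assms(2,4) continuous_on_subset by blast
  ultimately have "continuous_on (pinu \<nu> ` U) (f \<circ> inv_into U (pinu \<nu>))"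
    by (intro continuous_on_compose) auto
  then show ?thesis using continuous_on_interior[of _ _ z] interior_open[OF h(1)] z by metis
qed

lemma hol_rt:
  assumes "0 < R1" "2 \<le> \<nu>"
  shows "hol_fun (top_of_set (Omega R1 R2 \<nu>)) (pinu \<nu>) (rt \<nu>)"
proof (rule hol_fun_OmegaI[OF assms])
  fix U assume U: "open U" "U \<subseteq> Omega R1 R2 \<nu>" "inj_on (pinu \<nu>) U"
  note h = chart_Omega_homeo[OF U(1,3)]
  show "holo2 (rt \<nu> \<circ> inv_into U (pinu \<nu>)) (pinu \<nu> ` U)"
    unfolding holo2_def
  proof (intro conjI ballI)
    show "open (pinu \<nu> ` U)" by (rule h(1))
    fix z assume z: "z \<in> pinu \<nu> ` U"
    let ?G = "rt \<nu> \<circ> inv_into U (pinu \<nu>)"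
    have iz: "inv_into U (pinu \<nu>) z \<in> Omega R1 R2 \<nu>" using U(2) inv_into_into[OF z] by blast
    have "\<nu> = \<infinity> \<or> ?G z \<noteq> 0" using rt_nonzero[OF assms iz] by auto
    then obtain e where e: "e \<noteq> 0" "(pnu \<nu> has_field_derivative e) (at (?G z))"
      using pnu_deriv_ex[OF assms(2)] by metis
    have "(?G has_derivative (\<lambda>h. (1/e) * fst h + (\<i>/e) * snd h)) (at z)"
    proof (rule deriv_inv_lemma[where E="pnu \<nu>" and e=e and T="pinu \<nu> ` U"])
      show "(pnu \<nu> has_field_derivative e) (at (?G z))" by (rule e(2))
      show "e \<noteq> 0" by (rule e(1))
      show "open (pinu \<nu> ` U)" by (rule h(1))
      show "z \<in> pinu \<nu> ` U" by (rule z)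
      show "continuous (at z) ?G" using chart_cont[OF U continuous_rt[OF assms] z] .
      fix z' assume z': "z' \<in> pinu \<nu> ` U"
      then have "inv_into U (pinu \<nu>) z' \<in> Omega R1 R2 \<nu>" using U(2) inv_into_into[OF z'] by blast
      then show "pnu \<nu> (?G z') = WW z'"
        using pnu_rt[OF assms] f_inv_into_f[OF z'] by simp
    qed
    then show "\<exists>a b. (?G has_derivative (\<lambda>h. a * fst h + b * snd h)) (at z)" by blast
  qed
qed

lemma continuous_WW: "continuous_on S WW"
  unfolding WW_def [abs_def] by (intro continuous_intros)

lemma hol_recip:
  assumes "0 < R1" "2 \<le> \<nu>"
  shows "hol_fun (top_of_set (Omega R1 R2 \<nu>)) (pinu \<nu>) (\<lambda>x. 1 / WW (pinu \<nu> x))"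
proof (rule hol_fun_OmegaI[OF assms])
  fix U assume U: "open U" "U \<subseteq> Omega R1 R2 \<nu>" "inj_on (pinu \<nu>) U"
  note h = chart_Omega_homeo[OF U(1,3)]
  let ?G = "(\<lambda>x. 1 / WW (pinu \<nu> x)) \<circ> inv_into U (pinu \<nu>)"
  have Geq: "?G z' = inverse (WW z')" if "z' \<in> pinu \<nu> ` U" for z'
    using f_inv_into_f[OF that] by (simp add: divide_inverse)
  have nz: "WW z' \<noteq> 0" if "z' \<in> pinu \<nu> ` U" for z'
    using that U(2) WW_pinu_nonzero[OF assms] by auto
  show "holo2 ?G (pinu \<nu> ` U)"
    unfolding holo2_def
  proof (intro conjI ballI)
    show "open (pinu \<nu> ` U)" by (rule h(1))
    fix z assume z: "z \<in> pinu \<nu> ` U"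
    have Gnz: "?G z \<noteq> 0" using nz[OF z] Geq[OF z] by simp
    have e: "(inverse has_field_derivative (- (inverse (?G z) ^ Suc (Suc 0)))) (at (?G z))"
      by (rule DERIV_inverse[OF Gnz])
    have "(?G has_derivative (\<lambda>h. (1/(- (inverse (?G z) ^ Suc (Suc 0)))) * fst h + (\<i>/(- (inverse (?G z) ^ Suc (Suc 0)))) * snd h)) (at z)"
    proof (rule deriv_inv_lemma[where E=inverse and e="- (inverse (?G z) ^ Suc (Suc 0))" and T="pinu \<nu> ` U"])
      show "(inverse has_field_derivative (- (inverse (?G z) ^ Suc (Suc 0)))) (at (?G z))" by (rule e)
      show "open (pinu \<nu> ` U)" by (rule h(1))
      show "z \<in> pinu \<nu> ` U" by (rule z)
      show "- (inverse (?G z) ^ Suc (Suc 0)) \<noteq> 0" using Gnz by simp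
      have "continuous_on (pinu \<nu> ` U) (\<lambda>z. inverse (WW z))"
        using nz by (intro continuous_on_inverse[OF continuous_WW]) blast
      then have "continuous_on (pinu \<nu> ` U) ?G"
        by (rule continuous_on_eq) (simp only: Geq)
      then show "continuous (at z) ?G" using continuous_on_interior[of _ _ z] interior_open[OF h(1)] z by metis
      fix z' assume z': "z' \<in> pinu \<nu> ` U"
      then show "inverse (?G z') = WW z'" using Geq[OF z'] by simp
    qed
    then show "\<exists>a b. (?G has_derivative (\<lambda>h. a * fst h + b * snd h)) (at z)" by blast
  qed
qed


lemma chart_open_image:
  assumes "openin Y U1" "homeomorphic_map (subtopology Y U1) (top_of_set (q ` U1)) q"
    "open (q ` U1)" "openin Y W" "W \<subseteq> U1"
  shows "open (q ` W)"
proof -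
  have "open_map (subtopology Y U1) (top_of_set (q ` U1)) q"
    using assms(2) homeomorphic_imp_open_map by blast
  moreover have "openin (subtopology Y U1) W"
    using openin_subtopology_Int[OF assms(4), of U1] assms(5) by (simp add: Int_absorb2)
  ultimately have "openin (top_of_set (q ` U1)) (q ` W)" unfolding open_map_def by blast
  then show ?thesis using assms(3) openin_open_trans by blast
qed

lemma chart_preimage:
  assumes "openin Y U1" "homeomorphic_map (subtopology Y U1) (top_of_set (q ` U1)) q" "open B"
  shows "openin Y {v \<in> U1. q v \<in> B}"
proof -
  have cm: "continuous_map (subtopology Y U1) (top_of_set (q ` U1)) q"
    using assms(2) homeomorphic_imp_continuous_map by blast
  have "openin (top_of_set (q ` U1)) (q ` U1 \<inter> B)" using assms(3) by (rule openin_open_Int)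
  then have "openin (subtopology Y U1) {x \<in> topspace (subtopology Y U1). q x \<in> q ` U1 \<inter> B}"
    using openin_continuous_map_preimage[OF cm] by blast
  moreover have "{x \<in> topspace (subtopology Y U1). q x \<in> q ` U1 \<inter> B} = {v \<in> U1. q v \<in> B}"
    using openin_subset[OF assms(1)] by auto
  ultimately show ?thesis using openin_trans_full[OF _ assms(1)] by simp
qed

lemma chart_inj:
  assumes "openin Y U1" "homeomorphic_map (subtopology Y U1) (top_of_set (q ` U1)) q"
  shows "inj_on q U1"
proof -
  have "inj_on q (topspace (subtopology Y U1))"
    using assms(2) homeomorphic_imp_injective_map by blast
  moreover have "topspace (subtopology Y U1) = U1"
    using openin_subset[OF assms(1)] by auto
  ultimately show ?thesis by simp
qed

lemma ball_identity:
  fixes \<Phi> :: "complex \<times> complex \<Rightarrow> complex"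
  assumes D: "\<And>z. z \<in> ball c r \<Longrightarrow> \<exists>a b. (\<Phi> has_derivative (\<lambda>h. a * fst h + b * snd h)) (at z)"
    and Oo: "open Oo" "Oo \<subseteq> ball c r" "w0 \<in> Oo" "\<And>w. w \<in> Oo \<Longrightarrow> \<Phi> w = 0"
    and z: "z \<in> ball c r"
  shows "\<Phi> z = 0"
proof -
  define d where "d = z - w0"
  define Lin where "Lin = (\<lambda>t::complex. (t * fst d, t * snd d))"
  define L where "L = (\<lambda>t. w0 + Lin t)"
  define S where "S = {t. L t \<in> ball c r}"
  have linL: "linear Lin" unfolding Lin_def
    by (rule linearI) (simp_all add: algebra_simps scaleR_conv_of_real)
  have dLin: "(Lin has_derivative Lin) (at t)" for t
    using linL by (rule linear_imp_has_derivative)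
  have dL: "(L has_derivative Lin) (at t)" for t
    unfolding L_def using has_derivative_add[OF has_derivative_const[of w0] dLin[of t]] by simp
  have contL: "continuous_on UNIV L"
    unfolding L_def Lin_def by (intro continuous_intros)
  have "S = Lin -` ball (c - w0) r"
    by (simp add: S_def L_def dist_norm diff_diff_eq vimage_def)
  then have "convex S" using convex_linear_vimage[OF linL convex_ball] by simp
  then have connS: "connected S" by (rule convex_connected)
  have openS: "open S" unfolding S_def
    using open_vimage[OF open_ball contL] by (simp add: vimage_def)
  have holo: "(\<Phi> \<circ> L) holomorphic_on S"
    unfolding holomorphic_on_def
  proof
    fix t assume "t \<in> S"
    then have Lt: "L t \<in> ball c r" by (simp add: S_def)
    obtain a b where ab: "(\<Phi> has_derivative (\<lambda>h. a * fst h + b * snd h)) (at (L t))"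
      using D[OF Lt] by blast
    have "((\<Phi> \<circ> L) has_derivative (\<lambda>s. a * fst (Lin s) + b * snd (Lin s))) (at t)"
      using has_derivative_compose[OF dL ab] by (simp add: o_def)
    moreover have "(\<lambda>s. a * fst (Lin s) + b * snd (Lin s)) = (*) (a * fst d + b * snd d)"
      by (auto simp: Lin_def fun_eq_iff algebra_simps)
    ultimately have "((\<Phi> \<circ> L) has_field_derivative (a * fst d + b * snd d)) (at t)"
      by (simp add: has_field_derivative_def)
    then have "(\<Phi> \<circ> L) field_differentiable (at t)"
      unfolding field_differentiable_def by (rule exI)
    then show "(\<Phi> \<circ> L) field_differentiable (at t within S)"
      by (rule field_differentiable_at_within)
  qed
  have L0: "L 0 = w0" by (simp add: L_def Lin_def zero_prod_def)
  have L1: "L 1 = z" by (simp add: L_def Lin_def d_def prod_eq_iff)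
  have "(\<Phi> \<circ> L) 1 = (\<lambda>_. 0) 1"
  proof (rule analytic_continuation_open[where s="S \<inter> L -` Oo" and s'=S and f="\<Phi> \<circ> L" and g="\<lambda>_. 0" and z=1])
    show "open (S \<inter> L -` Oo)" using openS open_vimage[OF Oo(1) contL] by blast
    show "open S" by (rule openS)
    have "0 \<in> S \<inter> L -` Oo" using L0 Oo(2,3) by (auto simp: S_def)
    then show "S \<inter> L -` Oo \<noteq> {}" by blast
    show "connected S" by (rule connS)
    show "S \<inter> L -` Oo \<subseteq> S" by blast
    show "(\<Phi> \<circ> L) holomorphic_on S" by (rule holo)
    show "(\<lambda>_. 0) holomorphic_on S" by simp
    show "\<And>t. t \<in> S \<inter> L -` Oo \<Longrightarrow> (\<Phi> \<circ> L) t = 0" using Oo(4) by auto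
    show "1 \<in> S" using L1 z by (simp add: S_def)
  qed
  then show ?thesis using L1 by simp
qed


lemma good_chart:
  assumes rd: "riemann_domain Y q" and hf: "hol_fun Y q H" and y: "y \<in> topspace Y"
  obtains V r c where "openin Y V" "y \<in> V" "r > 0" "q ` V = ball c r" "inj_on q V"
    "\<And>W. openin Y W \<Longrightarrow> W \<subseteq> V \<Longrightarrow> open (q ` W)"
    "\<And>z. z \<in> ball c r \<Longrightarrow> \<exists>a b. ((H \<circ> inv_into V q) has_derivative (\<lambda>h. a * fst h + b * snd h)) (at z)"
proof -
  obtain U1 where U1: "openin Y U1" "y \<in> U1" "open (q ` U1)"
      "homeomorphic_map (subtopology Y U1) (top_of_set (q ` U1)) q"
    using rd y unfolding riemann_domain_def by blast
  obtain U2 where U2: "openin Y U2" "y \<in> U2" "inj_on q U2" "holo2 (H \<circ> inv_into U2 q) (q ` U2)"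
    using hf y unfolding hol_fun_def by blast
  define U3 where "U3 = U1 \<inter> U2"
  have oU3: "openin Y U3" using U1(1) U2(1) by (simp add: U3_def openin_Int)
  have openmap: "open (q ` W)" if "openin Y W" "W \<subseteq> U1" for W
    using chart_open_image[OF U1(1) U1(4) U1(3) that] .
  have oq3: "open (q ` U3)" using openmap[OF oU3] by (simp add: U3_def)
  have qy3: "q y \<in> q ` U3" using U1(2) U2(2) by (simp add: U3_def)
  obtain r where r: "r > 0" "ball (q y) r \<subseteq> q ` U3"
    by (rule openE[OF oq3 qy3])
  define V where "V = {v \<in> U1. q v \<in> ball (q y) r} \<inter> U2"
  have oV: "openin Y V"
    unfolding V_def using chart_preimage[OF U1(1) U1(4) open_ball] U2(1) by (rule openin_Int)
  have yV: "y \<in> V" using U1(2) U2(2) r(1) by (simp add: V_def)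
  have VU2: "V \<subseteq> U2" and VU1: "V \<subseteq> U1" by (auto simp: V_def)
  have qV: "q ` V = ball (q y) r"
  proof
    show "q ` V \<subseteq> ball (q y) r" by (auto simp: V_def)
    show "ball (q y) r \<subseteq> q ` V"
    proof
      fix w assume w: "w \<in> ball (q y) r"
      then obtain v where v: "v \<in> U3" "w = q v" using r(2) by blast
      then have "v \<in> V" using w by (simp add: V_def U3_def)
      then show "w \<in> q ` V" using v(2) by blast
    qed
  qed
  have injV: "inj_on q V" using U2(3) VU2 inj_on_subset by blast
  have der: "\<exists>a b. ((H \<circ> inv_into V q) has_derivative (\<lambda>h. a * fst h + b * snd h)) (at z)"
    if z: "z \<in> ball (q y) r" for z
  proof -
    have zU2: "z \<in> q ` U2" using z qV VU2 by blast
    obtain a b where ab: "((H \<circ> inv_into U2 q) has_derivative (\<lambda>h. a * fst h + b * snd h)) (at z)"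
      using U2(4) zU2 unfolding holo2_def by blast
    have eq: "(H \<circ> inv_into U2 q) w = (H \<circ> inv_into V q) w" if w: "w \<in> ball (q y) r" for w
    proof -
      have wV: "w \<in> q ` V" using w qV by simp
      have "inv_into V q w \<in> V" "q (inv_into V q w) = w"
        using inv_into_into[OF wV] f_inv_into_f[OF wV] by auto
      then have "inv_into V q w \<in> U2" using VU2 by blast
      then have "inv_into U2 q (q (inv_into V q w)) = inv_into V q w"
        by (rule inv_into_f_f[OF U2(3)])
      then show ?thesis using \<open>q (inv_into V q w) = w\<close> by simp
    qed
    have "((H \<circ> inv_into V q) has_derivative (\<lambda>h. a * fst h + b * snd h)) (at z)"
      by (rule has_derivative_transform_within_open[OF ab open_ball z eq])
    then show ?thesis by blast
  qed
  show ?thesis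
  proof (rule that[OF oV yV r(1) qV injV])
    show "open (q ` W)" if "openin Y W" "W \<subseteq> V" for W using openmap[OF that(1) subset_trans[OF that(2) VU1]] .
    show "\<exists>a b. ((H \<circ> inv_into V q) has_derivative (\<lambda>h. a * fst h + b * snd h)) (at z)"
      if "z \<in> ball (q y) r" for z using der[OF that] .
  qed
qed


lemma rd_identity:
  assumes rd: "riemann_domain Y q" and hf: "hol_fun Y q H"
    and Oo: "openin Y Oo" "Oo \<noteq> {}" "\<And>y. y \<in> Oo \<Longrightarrow> H y = 0"
    and y: "y \<in> topspace Y"
  shows "H y = 0"
proof -
  define S where "S = {y \<in> topspace Y. \<exists>N. openin Y N \<and> y \<in> N \<and> (\<forall>w\<in>N. H w = 0)}"
  have key: "\<forall>w\<in>V. H w = 0"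
    if V: "openin Y V" "r > 0" "q ` V = ball c r" "inj_on q V"
      "\<And>W. openin Y W \<Longrightarrow> W \<subseteq> V \<Longrightarrow> open (q ` W)"
      "\<And>z. z \<in> ball c r \<Longrightarrow> \<exists>a b. ((H \<circ> inv_into V q) has_derivative (\<lambda>h. a * fst h + b * snd h)) (at z)"
      and v: "v \<in> V" "v \<in> S" for V r c v
  proof -
    obtain N where N: "openin Y N" "v \<in> N" "\<forall>w\<in>N. H w = 0" using v(2) by (auto simp: S_def)
    have oN': "openin Y (N \<inter> V)" using N(1) V(1) by (rule openin_Int)
    have qN': "open (q ` (N \<inter> V))" using V(5)[OF oN'] by blast
    have sub: "q ` (N \<inter> V) \<subseteq> ball c r" using V(3) by blast
    have qv: "q v \<in> q ` (N \<inter> V)" using N(2) v(1) by blast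
    have zero: "(H \<circ> inv_into V q) w' = 0" if w': "w' \<in> q ` (N \<inter> V)" for w'
    proof -
      obtain n where n: "n \<in> N \<inter> V" "w' = q n" using w' by blast
      have "n \<in> V" using n(1) by simp
      then have "inv_into V q (q n) = n" by (rule inv_into_f_f[OF V(4)])
      then show ?thesis using n N(3) by simp
    qed
    show ?thesis
    proof
      fix w assume w: "w \<in> V"
      then have qw: "q w \<in> ball c r" using V(3) by blast
      have "(H \<circ> inv_into V q) (q w) = 0"
        by (rule ball_identity[OF V(6) qN' sub qv zero qw])
      moreover have "inv_into V q (q w) = w" using inv_into_f_f[OF V(4) w] .
      ultimately show "H w = 0" by simp
    qed
  qed
  have oS: "openin Y S"
  proof (subst openin_subopen, intro ballI)
    fix x assume "x \<in> S"
    then obtain N where N: "openin Y N" "x \<in> N" "\<forall>w\<in>N. H w = 0" by (auto simp: S_def)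
    have "N \<subseteq> S"
    proof
      fix w assume "w \<in> N"
      then show "w \<in> S" using N openin_subset[OF N(1)] unfolding S_def by blast
    qed
    then show "\<exists>T. openin Y T \<and> x \<in> T \<and> T \<subseteq> S" using N by blast
  qed
  have cS: "closedin Y S"
    unfolding closedin_def
  proof
    show "S \<subseteq> topspace Y" by (auto simp: S_def)
    show "openin Y (topspace Y - S)"
    proof (subst openin_subopen, intro ballI)
      fix x assume x: "x \<in> topspace Y - S"
      then have xt: "x \<in> topspace Y" by simp
      show "\<exists>T. openin Y T \<and> x \<in> T \<and> T \<subseteq> topspace Y - S"
      proof (rule good_chart[OF rd hf xt])
        fix V r c assume V: "openin Y V" "x \<in> V" "r > 0" "q ` V = ball c r" "inj_on q V"
          "\<And>W. openin Y W \<Longrightarrow> W \<subseteq> V \<Longrightarrow> open (q ` W)"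
          "\<And>z. z \<in> ball c r \<Longrightarrow> \<exists>a b. ((H \<circ> inv_into V q) has_derivative (\<lambda>h. a * fst h + b * snd h)) (at z)"
      have "V \<inter> S = {}"
      proof (rule ccontr)
        assume "V \<inter> S \<noteq> {}"
        then obtain v where vv: "v \<in> V" "v \<in> S" by blast
        have "\<forall>w\<in>V. H w = 0" by (rule key[OF V(1,3,4,5,6,7) vv])
        then have "x \<in> S" using V(1,2) x unfolding S_def by blast
        then show False using x by blast
      qed
      then have "V \<subseteq> topspace Y - S" using openin_subset[OF V(1)] by blast
      then show "\<exists>T. openin Y T \<and> x \<in> T \<and> T \<subseteq> topspace Y - S" using V(1,2) by blast
      qed
    qed
  qed
  have "S \<noteq> {}"
  proof -
    obtain y0 where "y0 \<in> Oo" using Oo(2) by blast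
    then have "y0 \<in> S" using Oo(1,3) openin_subset[OF Oo(1)] unfolding S_def by blast
    then show ?thesis by blast
  qed
  moreover have "connected_space Y" using rd by (simp add: riemann_domain_def)
  moreover have "\<forall>T. openin Y T \<and> closedin Y T \<longrightarrow> T = {} \<or> T = topspace Y"
    using \<open>connected_space Y\<close> by (simp add: connected_space_clopen_in)
  ultimately have "S = topspace Y" using oS cS by blast
  then have "y \<in> S" using y by simp
  then show ?thesis unfolding S_def by blast
qed


lemma hol_fun_prod:
  assumes hf: "hol_fun Y q F"
  shows "hol_fun Y q (\<lambda>y. F y * WW (q y) - 1)"
  unfolding hol_fun_def
proof
  fix y assume y: "y \<in> topspace Y"
  obtain U where U: "openin Y U" "y \<in> U" "inj_on q U" "holo2 (F \<circ> inv_into U q) (q ` U)"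
    using hf y unfolding hol_fun_def by blast
  have oq: "open (q ` U)" using U(4) by (simp add: holo2_def)
  have "holo2 ((\<lambda>y. F y * WW (q y) - 1) \<circ> inv_into U q) (q ` U)"
    unfolding holo2_def
  proof (intro conjI ballI)
    show "open (q ` U)" by (rule oq)
    fix z assume z: "z \<in> q ` U"
    obtain a b where ab: "((F \<circ> inv_into U q) has_derivative (\<lambda>h. a * fst h + b * snd h)) (at z)"
      using U(4) z unfolding holo2_def by blast
    have dW: "(WW has_derivative WW) (at z)"
      unfolding WW_def [abs_def] by (auto intro!: derivative_eq_intros)
    have "((\<lambda>w. (F \<circ> inv_into U q) w * WW w - 1) has_derivative
          (\<lambda>h. (F \<circ> inv_into U q) z * WW h + (a * fst h + b * snd h) * WW z - 0)) (at z)"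
      by (intro has_derivative_diff has_derivative_mult ab dW has_derivative_const)
    moreover have "(\<lambda>h. (F \<circ> inv_into U q) z * WW h + (a * fst h + b * snd h) * WW z - 0) =
        (\<lambda>h. ((F \<circ> inv_into U q) z + a * WW z) * fst h + (\<i> * (F \<circ> inv_into U q) z + b * WW z) * snd h)"
      by (auto simp: fun_eq_iff WW_def algebra_simps)
    ultimately have d: "((\<lambda>w. (F \<circ> inv_into U q) w * WW w - 1) has_derivative
          (\<lambda>h. ((F \<circ> inv_into U q) z + a * WW z) * fst h + (\<i> * (F \<circ> inv_into U q) z + b * WW z) * snd h)) (at z)"
      by simp
    have eq: "(F \<circ> inv_into U q) w * WW w - 1 = ((\<lambda>y. F y * WW (q y) - 1) \<circ> inv_into U q) w"
      if "w \<in> q ` U" for w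
      using f_inv_into_f[OF that] by simp
    have "(((\<lambda>y. F y * WW (q y) - 1) \<circ> inv_into U q) has_derivative
          (\<lambda>h. ((F \<circ> inv_into U q) z + a * WW z) * fst h + (\<i> * (F \<circ> inv_into U q) z + b * WW z) * snd h)) (at z)"
      by (rule has_derivative_transform_within_open[OF d oq z eq])
    then show "\<exists>a b. (((\<lambda>y. F y * WW (q y) - 1) \<circ> inv_into U q) has_derivative (\<lambda>h. a * fst h + b * snd h)) (at z)"
      by blast
  qed
  then show "\<exists>U. openin Y U \<and> y \<in> U \<and> inj_on q U \<and> holo2 ((\<lambda>y. F y * WW (q y) - 1) \<circ> inv_into U q) (q ` U)"
    using U by blast
qed


lemma env_not_univalent:
  assumes R: "0 < R1" "ereal R1 < R2" "2 \<le> \<nu>"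
    and env: "is_envelope (top_of_set (Omega R1 R2 \<nu>)) (pinu \<nu>) Y q \<phi>"
  shows "\<not> univalent Y q"
proof
  assume uni: "univalent Y q"
  obtain x0 where x0: "x0 \<in> Omega R1 R2 \<nu>" using Omega_nonempty[OF R] by blast
  obtain x1 where x1: "x1 \<in> Omega R1 R2 \<nu>" "x1 \<noteq> x0" "pinu \<nu> x1 = pinu \<nu> x0"
    using fibre_other[OF R(1,3) x0] by blast
  have dm: "domain_map (top_of_set (Omega R1 R2 \<nu>)) (pinu \<nu>) Y q \<phi>"
    and ext: "extends_all (top_of_set (Omega R1 R2 \<nu>)) (pinu \<nu>) Y q \<phi>"
    using env by (simp_all add: is_envelope_def)
  have "\<exists>F. hol_fun Y q F \<and> (\<forall>x\<in>topspace (top_of_set (Omega R1 R2 \<nu>)). F (\<phi> x) = rt \<nu> x)"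
    using ext hol_rt[OF R(1,3)] unfolding extends_all_def by blast
  then obtain F where F: "hol_fun Y q F" "\<forall>x\<in>Omega R1 R2 \<nu>. F (\<phi> x) = rt \<nu> x"
    by auto
  have cm: "continuous_map (top_of_set (Omega R1 R2 \<nu>)) Y \<phi>"
    and qp: "\<forall>x\<in>Omega R1 R2 \<nu>. q (\<phi> x) = pinu \<nu> x"
    using dm by (simp_all add: domain_map_def)
  have inY: "\<phi> x \<in> topspace Y" if "x \<in> Omega R1 R2 \<nu>" for x
    using continuous_map_image_subset_topspace[OF cm] that by auto
  have "q (\<phi> x1) = q (\<phi> x0)" using qp x0 x1 by simp
  then have "\<phi> x1 = \<phi> x0"
    using uni inY[OF x0] inY[OF x1(1)] unfolding univalent_def by (meson inj_onD)
  moreover have "rt \<nu> x1 = F (\<phi> x1)" "rt \<nu> x0 = F (\<phi> x0)" using F(2) x0 x1(1) by simp_all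
  ultimately have "rt \<nu> x1 = rt \<nu> x0" by simp
  then have "x1 = x0" using rt_inj_fibre[OF R(1,3) x1(1) x0 x1(3)] by simp
  then show False using x1(2) by simp
qed

lemma env_no_zero:
  assumes R: "0 < R1" "ereal R1 < R2" "2 \<le> \<nu>"
    and env: "is_envelope (top_of_set (Omega R1 R2 \<nu>)) (pinu \<nu>) Y q \<phi>"
  shows "(0, 0) \<notin> q ` topspace Y"
proof
  assume z0: "(0, 0) \<in> q ` topspace Y"
  let ?p = "pinu \<nu>" and ?\<Omega> = "Omega R1 R2 \<nu>"
  have rd: "riemann_domain Y q"
    and dm: "domain_map (top_of_set ?\<Omega>) ?p Y q \<phi>"
    and ext: "extends_all (top_of_set ?\<Omega>) ?p Y q \<phi>"
    using env by (simp_all add: is_envelope_def)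
  have "\<exists>F. hol_fun Y q F \<and> (\<forall>x\<in>topspace (top_of_set ?\<Omega>). F (\<phi> x) = 1 / WW (?p x))"
    using ext hol_recip[OF R(1,3)] unfolding extends_all_def by blast
  then obtain F where F: "hol_fun Y q F" "\<forall>x\<in>?\<Omega>. F (\<phi> x) = 1 / WW (?p x)"
    by auto
  define H where "H = (\<lambda>y. F y * WW (q y) - 1)"
  have hH: "hol_fun Y q H" unfolding H_def by (rule hol_fun_prod[OF F(1)])
  have cm: "continuous_map (top_of_set ?\<Omega>) Y \<phi>"
    and qp: "\<forall>x\<in>?\<Omega>. q (\<phi> x) = ?p x"
    using dm by (simp_all add: domain_map_def)
  have inY: "\<phi> x \<in> topspace Y" if "x \<in> ?\<Omega>" for x
    using continuous_map_image_subset_topspace[OF cm] that by auto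
  obtain x0 where x0: "x0 \<in> ?\<Omega>" using Omega_nonempty[OF R] by blast
  obtain V1 where V1: "openin Y V1" "\<phi> x0 \<in> V1" "open (q ` V1)"
      "homeomorphic_map (subtopology Y V1) (top_of_set (q ` V1)) q"
    using rd inY[OF x0] unfolding riemann_domain_def by blast
  define N where "N = {x \<in> topspace (top_of_set ?\<Omega>). \<phi> x \<in> V1}"
  have "openin (top_of_set ?\<Omega>) N"
    unfolding N_def by (rule openin_continuous_map_preimage[OF cm V1(1)])
  then have oN: "open N" using open_Omega openin_open_trans by blast
  have Nsub: "\<phi> x \<in> V1" if "x \<in> N" for x using that by (simp add: N_def)
  obtain U where U: "open U" "U \<subseteq> ?\<Omega>" "x0 \<in> U" "inj_on ?p U"
    using chart_Omega[OF R(1,3) x0] by blast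
  define U' where "U' = U \<inter> N"
  have oU': "open U'" using U(1) oN by (simp add: U'_def open_Int)
  have injU': "inj_on ?p U'" using U(4) by (simp add: U'_def inj_on_Int)
  have x0U': "x0 \<in> U'" using U(3) x0 V1(2) by (simp add: U'_def N_def)
  have opU': "open (?p ` U')" using chart_Omega_homeo(1)[OF oU' injU'] .
  define Oo where "Oo = {v \<in> V1. q v \<in> ?p ` U'}"
  have oO: "openin Y Oo" unfolding Oo_def by (rule chart_preimage[OF V1(1) V1(4) opU'])
  have "\<phi> x0 \<in> Oo" using V1(2) qp x0 x0U' by (simp add: Oo_def)
  then have neO: "Oo \<noteq> {}" by blast
  have injV1: "inj_on q V1" by (rule chart_inj[OF V1(1) V1(4)])
  have H0: "H v = 0" if v: "v \<in> Oo" for v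
  proof -
    obtain x where x: "x \<in> U'" "q v = ?p x" using v by (auto simp: Oo_def)
    have xO: "x \<in> ?\<Omega>" using x(1) U(2) by (auto simp: U'_def)
    have "\<phi> x \<in> V1" using x(1) Nsub by (simp add: U'_def)
    moreover have "q (\<phi> x) = q v" using qp xO x(2) by simp
    moreover have "v \<in> V1" using v by (simp add: Oo_def)
    ultimately have "\<phi> x = v" using injV1 by (meson inj_onD)
    then have "H v = F (\<phi> x) * WW (q (\<phi> x)) - 1" by (simp add: H_def)
    also have "\<dots> = (1 / WW (?p x)) * WW (?p x) - 1" using F(2) qp xO by simp
    also have "\<dots> = 0" using WW_pinu_nonzero[OF R(1,3) xO] by simp
    finally show ?thesis .
  qed
  obtain y0 where y0: "y0 \<in> topspace Y" "q y0 = (0, 0)" using z0 by auto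
  have "H y0 = 0" by (rule rd_identity[OF rd hH oO neO H0 y0(1)])
  moreover have "H y0 = - 1" using y0(2) by (simp add: H_def WW_zero)
  ultimately show False by simp
qed

theorem mainTheorem5:
  fixes R1 :: real and R2 :: ereal and \<nu> :: enat
  assumes "0 < R1" and "ereal R1 < R2" and "2 \<le> \<nu>"
  shows "riemann_domain (subtopology euclidean (Omega R1 R2 \<nu>)) (pinu \<nu>) \<and>
         sheeted (subtopology euclidean (Omega R1 R2 \<nu>)) (pinu \<nu>) \<nu> \<and>
         hol_separable (subtopology euclidean (Omega R1 R2 \<nu>)) (pinu \<nu>) \<and>
         (\<forall>(Y :: 'b topology) q \<phi>.
            is_envelope (subtopology euclidean (Omega R1 R2 \<nu>)) (pinu \<nu>) Y q \<phi> \<longrightarrow>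
            \<not> univalent Y q \<and> (0, 0) \<notin> q ` topspace Y)"
proof (intro conjI allI impI)
  show "riemann_domain (subtopology euclidean (Omega R1 R2 \<nu>)) (pinu \<nu>)"
    by (rule riemann_Omega[OF assms])
  show "sheeted (subtopology euclidean (Omega R1 R2 \<nu>)) (pinu \<nu>) \<nu>"
    by (rule sheeted_Omega[OF assms(1,3)])
  show "hol_separable (subtopology euclidean (Omega R1 R2 \<nu>)) (pinu \<nu>)"
    unfolding hol_separable_def
  proof (intro ballI impI)
    fix x y assume xy: "x \<in> topspace (top_of_set (Omega R1 R2 \<nu>))" "y \<in> topspace (top_of_set (Omega R1 R2 \<nu>))"
      "x \<noteq> y \<and> pinu \<nu> x = pinu \<nu> y"
    have x: "x \<in> Omega R1 R2 \<nu>" and y: "y \<in> Omega R1 R2 \<nu>" using xy(1,2) by simp_all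
    have "\<not> same_germ (top_of_set (Omega R1 R2 \<nu>)) (pinu \<nu>) (rt \<nu>) x y"
    proof
      assume "same_germ (top_of_set (Omega R1 R2 \<nu>)) (pinu \<nu>) (rt \<nu>) x y"
      then obtain U V where UV: "x \<in> U" "y \<in> V" "\<forall>u\<in>U. \<forall>v\<in>V. pinu \<nu> u = pinu \<nu> v \<longrightarrow> rt \<nu> u = rt \<nu> v"
        unfolding same_germ_def by blast
      then have "rt \<nu> x = rt \<nu> y" using xy(3) by blast
      then have "x = y" using rt_inj_fibre[OF assms(1,3) x y] xy(3) by blast
      then show False using xy(3) by blast
    qed
    then show "\<exists>f. hol_fun (top_of_set (Omega R1 R2 \<nu>)) (pinu \<nu>) f \<and> \<not> same_germ (top_of_set (Omega R1 R2 \<nu>)) (pinu \<nu>) f x y"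
      using hol_rt[OF assms(1,3)] by blast
  qed
  fix Y :: "'b topology" and q \<phi>
  assume env: "is_envelope (subtopology euclidean (Omega R1 R2 \<nu>)) (pinu \<nu>) Y q \<phi>"
  show "\<not> univalent Y q" by (rule env_not_univalent[OF assms env])
  show "(0, 0) \<notin> q ` topspace Y" by (rule env_no_zero[OF assms env])
qed


end
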